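(* $\mathsf{Permutation}\in\mathsf{dAM}[O(\log n)]$, where in $\mathsf{Permutation}$ each node $u$ of the $n$-node communication graph holds a value $a_u\in\{1,\dots,n\}$ and the instance is in the language iff the values $(a_u)_{u\in V}$ are pairwise distinct (i.e. form a permutation of $\{1,\dots,n\}$).
   Context: Distributed interactive proofs (model). An instance consists of a connected communication graph $G=(V,E)$ with $|V|=n$, where each node has a unique identifier of $O(\log n)$ bits, knows $n$, knows its own identifier, its local input (if the problem has local inputs), and the identifiers of its neighbours (with an arbitrary port numbering of its incident edges). A prover, who sees the whole instance, interacts with all nodes in $r$ alternating messages. In a verifier (node) message each node independently samples fresh uniformly random bits and sends them to the prover (public coins). In a prover message the prover sends each node a string. Nodes may additionally exchange the strings they received from the prover with their neighbours in $G$. At the end each node deterministically accepts or rejects as a function of its local information, its own random bits, the strings it received from the prover and those its neighbours received; the instance is accepted iff all nodes accept. The proof size is the maximum number of bits in any single message between the prover and any node. A language $\mathcal L$ (set of instances) is in $\mathsf{dIP}[r,\ell]$ if there is an $r$-message protocol of proof size $\ell=\ell(n)$ such that (completeness) for every instance in $\mathcal L$ some prover makes all nodes accept with probability $>2/3$, and (soundness) for every instance not in $\mathcal L$ and every prover, all nodes accept with probability $<1/3$ (probabilities over the nodes' coins). $\mathsf{dAM}[\ell]$, $\mathsf{dMAM}[\ell]$, $\mathsf{dAMAM}[\ell]$, $\mathsf{dMAMAM}[\ell]$ denote the cases of 2, 3, 4, 5 messages, where the letters indicate who sends each message in order (A = nodes send random coins, M = prover). *)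

theory Defs
  imports Main "HOL-Library.FuncSet" "HOL-Library.Landau_Symbols"
begin

text \<open>
Model of distributed Arthur-Merlin proofs (two messages: nodes send public coins,
then the prover answers).  Identifiers have O(log n) bits: V is contained in
{..< n^c} for a fixed constant c.
\<close>

definition valid_instance ::
  "nat \<Rightarrow> nat \<Rightarrow> nat set \<Rightarrow> (nat \<Rightarrow> nat \<Rightarrow> bool) \<Rightarrow> (nat \<Rightarrow> nat list) \<Rightarrow> bool" where
  "valid_instance c n V E port \<longleftrightarrow>
     finite V \<and> card V = n \<and> V \<noteq> {} \<and> V \<subseteq> {..< n ^ c} \<and>
     (\<forall>u v. E u v \<longrightarrow> u \<in> V \<and> v \<in> V \<and> u \<noteq> v \<and> E v u) \<and>
     (\<forall>u\<in>V. \<forall>v\<in>V. (u, v) \<in> {(x, y). E x y}\<^sup>*) \<and>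
     (\<forall>u\<in>V. distinct (port u) \<and> set (port u) = {v. E u v})"

definition coin_space :: "nat set \<Rightarrow> nat \<Rightarrow> (nat \<Rightarrow> bool list) set" where
  "coin_space V k = (\<Pi>\<^sub>E u\<in>V. {xs. length xs = k})"

definition prover_bounded ::
  "nat set \<Rightarrow> nat \<Rightarrow> nat \<Rightarrow> ((nat \<Rightarrow> bool list) \<Rightarrow> nat \<Rightarrow> bool list) \<Rightarrow> bool" where
  "prover_bounded V k l P \<longleftrightarrow> (\<forall>\<rho>\<in>coin_space V k. \<forall>u\<in>V. length (P \<rho> u) \<le> l)"

text \<open>Decision of node u: function of n, its identifier, its input, its own coins,
  its own prover string, and the list (in port order) of neighbour identifiers
  together with the strings those neighbours received.\<close>
type_synonym 'i decision =
  "nat \<Rightarrow> nat \<Rightarrow> 'i \<Rightarrow> bool list \<Rightarrow> bool list \<Rightarrow> (nat \<times> bool list) list \<Rightarrow> bool"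

definition all_accept ::
  "'i decision \<Rightarrow> nat \<Rightarrow> nat set \<Rightarrow> (nat \<Rightarrow> nat list) \<Rightarrow> (nat \<Rightarrow> 'i)
   \<Rightarrow> (nat \<Rightarrow> bool list) \<Rightarrow> (nat \<Rightarrow> bool list) \<Rightarrow> bool" where
  "all_accept dec n V port a \<rho> \<pi> \<longleftrightarrow>
     (\<forall>u\<in>V. dec n u (a u) (\<rho> u) (\<pi> u) (map (\<lambda>v. (v, \<pi> v)) (port u)))"

definition accept_prob ::
  "'i decision \<Rightarrow> nat \<Rightarrow> nat \<Rightarrow> nat set \<Rightarrow> (nat \<Rightarrow> nat list) \<Rightarrow> (nat \<Rightarrow> 'i)
   \<Rightarrow> ((nat \<Rightarrow> bool list) \<Rightarrow> nat \<Rightarrow> bool list) \<Rightarrow> real" where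
  "accept_prob dec k n V port a P =
     real (card {\<rho> \<in> coin_space V k. all_accept dec n V port a \<rho> (P \<rho>)})
     / real (card (coin_space V k))"

text \<open>Adm describes the admissible instances
  (the allowed local inputs), L the language.\<close>
definition in_dAM ::
  "nat \<Rightarrow> (nat \<Rightarrow> nat)
   \<Rightarrow> (nat \<Rightarrow> nat set \<Rightarrow> (nat \<Rightarrow> nat \<Rightarrow> bool) \<Rightarrow> (nat \<Rightarrow> 'i) \<Rightarrow> bool)
   \<Rightarrow> (nat \<Rightarrow> nat set \<Rightarrow> (nat \<Rightarrow> nat \<Rightarrow> bool) \<Rightarrow> (nat \<Rightarrow> 'i) \<Rightarrow> bool) \<Rightarrow> bool" where
  "in_dAM c l Adm L \<longleftrightarrow>
     (\<exists>(k :: nat \<Rightarrow> nat) (dec :: 'i decision).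
        (\<forall>n. k n \<le> l n) \<and>
        (\<forall>n V E port a. valid_instance c n V E port \<and> Adm n V E a \<longrightarrow>
           (L n V E a \<longrightarrow>
              (\<exists>P. prover_bounded V (k n) (l n) P \<and> accept_prob dec (k n) n V port a P > 2/3)) \<and>
           (\<not> L n V E a \<longrightarrow>
              (\<forall>P. prover_bounded V (k n) (l n) P \<longrightarrow> accept_prob dec (k n) n V port a P < 1/3))))"

definition perm_adm :: "nat \<Rightarrow> nat set \<Rightarrow> (nat \<Rightarrow> nat \<Rightarrow> bool) \<Rightarrow> (nat \<Rightarrow> nat) \<Rightarrow> bool" where
  "perm_adm n V E a \<longleftrightarrow> (\<forall>u\<in>V. a u \<in> {1..n})"

definition Permutation :: "nat \<Rightarrow> nat set \<Rightarrow> (nat \<Rightarrow> nat \<Rightarrow> bool) \<Rightarrow> (nat \<Rightarrow> nat) \<Rightarrow> bool" where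
  "Permutation n V E a \<longleftrightarrow> inj_on a V"

end

theory Submission
  imports Defs "HOL-Computational_Algebra.Primes" "HOL-Computational_Algebra.Polynomial" "HOL-Number_Theory.Cong"
begin


lemma suc_div_eq:
  fixes n d :: nat assumes "d > 0"
  shows "Suc n div d = n div d + (if d dvd Suc n then 1 else 0)"
  using div_Suc[of n d] by (simp add: dvd_eq_mod_eq_0)

lemma legendre:
  fixes p :: nat assumes p: "prime p"
  shows "n \<le> N \<Longrightarrow> multiplicity p (fact n) = (\<Sum>i\<in>{1..N}. n div p ^ i)"
proof (induction n)
  case 0
  then show ?case by simp
next
  case (Suc n)
  have p1: "p > 1" using p prime_gt_1_nat by blast
  have IH: "multiplicity p (fact n :: nat) = (\<Sum>i\<in>{1..N}. n div p ^ i)" using Suc by simp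
  have "multiplicity p (fact (Suc n) :: nat) = multiplicity p (Suc n * fact n)" by simp
  also have "\<dots> = multiplicity p (Suc n) + multiplicity p (fact n :: nat)"
    by (rule prime_elem_multiplicity_mult_distrib) (use p in auto)
  finally have A: "multiplicity p (fact (Suc n) :: nat) = multiplicity p (Suc n) + multiplicity p (fact n :: nat)" .
  have "(\<Sum>i\<in>{1..N}. Suc n div p ^ i) = (\<Sum>i\<in>{1..N}. n div p ^ i + (if p^i dvd Suc n then 1 else 0))"
    using p1 by (intro sum.cong) (auto simp: suc_div_eq)
  also have "\<dots> = (\<Sum>i\<in>{1..N}. n div p ^ i) + card {i\<in>{1..N}. p^i dvd Suc n}"
    by (simp add: sum.distrib sum.If_cases Int_def)
  also have "{i\<in>{1..N}. p^i dvd Suc n} = {1..multiplicity p (Suc n)}"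
  proof -
    have "p ^ multiplicity p (Suc n) dvd Suc n" by (simp add: multiplicity_dvd)
    hence "p ^ multiplicity p (Suc n) \<le> Suc n" by (rule dvd_imp_le) simp
    moreover have "multiplicity p (Suc n) < p ^ multiplicity p (Suc n)"
      using p1 less_exp[of "multiplicity p (Suc n)"] power_mono[of 2 p "multiplicity p (Suc n)"] by linarith
    ultimately have "multiplicity p (Suc n) \<le> N" using Suc.prems by linarith
    moreover have nu: "\<not> is_unit p" using p1 by simp
    have eq: "\<And>i. p ^ i dvd Suc n \<longleftrightarrow> i \<le> multiplicity p (Suc n)"
      using power_dvd_iff_le_multiplicity[of "Suc n" p] nu by blast
    ultimately show ?thesis unfolding eq by auto
  qed
  finally show ?case using A IH by simp
qed

lemma div2_bounds:
  fixes m x :: nat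
  shows "2 * (m div x) \<le> (2*m) div x" and "(2*m) div x \<le> 2 * (m div x) + 1"
proof -
  show "2 * (m div x) \<le> (2*m) div x"
    by (metis div_le_mono div_mult_self1_is_m le_refl mult.commute div_mult2_eq mult_2 add_mult_distrib
        div_add1_eq le_add1 dvd_triv_left)
  show "(2*m) div x \<le> 2 * (m div x) + 1"
  proof (cases "x = 0")
    case False
    have "2*m = 2 * (m mod x) + (2 * (m div x)) * x"
      using div_mult_mod_eq[of m x] by linarith
    hence "(2*m) div x = (2 * (m mod x) + (2 * (m div x)) * x) div x" by simp
    also have "\<dots> = 2 * (m div x) + (2 * (m mod x)) div x"
      using False by (rule div_mult_self1)
    finally have "(2*m) div x = 2 * (m div x) + (2 * (m mod x)) div x" .
    moreover have "(2 * (m mod x)) div x < 2"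
      using False by (simp add: div_less_iff_less_mult mod_less_divisor mult.commute)
    ultimately show ?thesis by linarith
  qed simp
qed

lemma binom_mult_bound:
  fixes p m :: nat assumes p: "prime p" and m: "m \<ge> 1"
  shows "p ^ multiplicity p ((2*m) choose m) \<le> 2*m"
proof -
  define C where "C = (2*m) choose m"
  have p1: "p > 1" using p prime_gt_1_nat by blast
  have C0: "C \<noteq> 0" unfolding C_def by simp
  have "fact m * fact (2*m - m) * C = (fact (2*m) :: nat)"
    unfolding C_def by (rule binomial_fact_lemma) simp
  hence F: "fact (2*m) = fact m * fact m * (C::nat)" by simp
  have "multiplicity p (fact (2*m) :: nat) = multiplicity p (fact m * fact m :: nat) + multiplicity p C"
    unfolding F by (rule prime_elem_multiplicity_mult_distrib) (use p C0 in auto)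
  also have "multiplicity p (fact m * fact m :: nat) = multiplicity p (fact m :: nat) + multiplicity p (fact m :: nat)"
    by (rule prime_elem_multiplicity_mult_distrib) (use p in auto)
  finally have E: "multiplicity p (fact (2*m) :: nat) = 2 * multiplicity p (fact m :: nat) + multiplicity p C" by simp
  have L1: "multiplicity p (fact (2*m) :: nat) = (\<Sum>i\<in>{1..2*m}. (2*m) div p ^ i)"
    by (rule legendre[OF p]) simp
  have L2: "multiplicity p (fact m :: nat) = (\<Sum>i\<in>{1..2*m}. m div p ^ i)"
    by (rule legendre[OF p]) simp
  define t where "t i = (2*m) div p ^ i - 2 * (m div p ^ i)" for i
  have "(\<Sum>i\<in>{1..2*m}. (2*m) div p ^ i) = (\<Sum>i\<in>{1..2*m}. 2 * (m div p ^ i) + t i)"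
    unfolding t_def using div2_bounds(1) by (intro sum.cong) auto
  also have "\<dots> = 2 * (\<Sum>i\<in>{1..2*m}. m div p ^ i) + (\<Sum>i\<in>{1..2*m}. t i)"
    by (simp add: sum.distrib sum_distrib_left)
  finally have MC: "multiplicity p C = (\<Sum>i\<in>{1..2*m}. t i)" using E L1 L2 by simp
  define T where "T = {i\<in>{1..2*m}. p ^ i \<le> 2*m}"
  have tle: "t i \<le> (if i \<in> T then 1 else 0)" if "i \<in> {1..2*m}" for i
  proof (cases "p ^ i \<le> 2*m")
    case True
    then show ?thesis using that div2_bounds(2)[of m "p^i"] unfolding t_def T_def by auto
  next
    case False
    then have "(2*m) div p ^ i = 0" by simp
    then show ?thesis unfolding t_def by simp
  qed
  have "multiplicity p C \<le> (\<Sum>i\<in>{1..2*m}. (if i \<in> T then 1 else 0))"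
    unfolding MC by (rule sum_mono) (rule tle)
  also have "\<dots> = card T" unfolding T_def by (simp add: sum.If_cases Int_def)
  finally have MT: "multiplicity p C \<le> card T" .
  show ?thesis
  proof (cases "T = {}")
    case True
    then show ?thesis using MT m unfolding C_def by simp
  next
    case False
    have fT: "finite T" unfolding T_def by simp
    define j where "j = Max T"
    have "j \<in> T" unfolding j_def using False fT by simp
    hence pj: "p ^ j \<le> 2*m" unfolding T_def by simp
    have "T \<subseteq> {1..j}" unfolding j_def using fT by (auto simp: T_def)
    hence "card T \<le> j" using card_mono[of "{1..j}" T] by simp
    hence "p ^ multiplicity p C \<le> p ^ j" using MT p1 by (intro power_increasing) auto
    thus ?thesis using pj unfolding C_def by simp
  qed
qed

lemma pow_ineq:
  fixes M :: nat assumes "M \<ge> 4"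
  shows "(2 * M^3) ^ M < 2 ^ (M^3)"
proof -
  have "M < 2 ^ M" by (rule less_exp)
  hence "M^3 < (2^M)^3" by (intro power_strict_mono) auto
  hence "2 * M^3 < 2 ^ (3*M + 1)" by (simp add: power_mult[symmetric] mult.commute)
  hence "(2 * M^3) ^ M < (2 ^ (3*M + 1)) ^ M" using assms by (intro power_strict_mono) auto
  also have "\<dots> = 2 ^ ((3*M+1)*M)" by (simp only: power_mult)
  also have "\<dots> \<le> 2 ^ (M^3)"
  proof (intro power_increasing)
    have "4*M \<le> M*M" using assms by simp
    hence "4*M*M \<le> M*M*M" by simp
    moreover have "M \<le> M*M" using assms by simp
    moreover have "(3*M+1)*M = 3*(M*M) + M" by (simp add: algebra_simps)
    moreover have "M^3 = M*M*M" by (simp add: power3_eq_cube)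
    ultimately show "(3*M+1)*M \<le> M^3" by linarith
  qed simp
  finally show ?thesis .
qed

lemma central_binom_lower: "2 ^ m \<le> (2*m) choose m"
proof -
  have "(2::nat) ^ m = (\<Sum>k\<le>m. m choose k)" by (simp add: choose_row_sum)
  also have "\<dots> \<le> (\<Sum>k\<le>m. (m choose k)^2)"
    by (intro sum_mono) (simp add: power2_eq_square le_square)
  also have "\<dots> = (2*m) choose m" by (rule choose_square_sum)
  finally show ?thesis .
qed

lemma prime_in_range:
  fixes M :: nat assumes M: "M \<ge> 4"
  shows "\<exists>p. prime p \<and> M < p \<and> p \<le> 2 * M^3"
proof (rule ccontr)
  assume nex: "\<not> ?thesis"
  define m where "m = M^3"
  have m1: "m \<ge> 1" unfolding m_def using M by simp
  define C where "C = (2*m) choose m"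
  have C0: "C \<noteq> 0" unfolding C_def by simp
  have small: "p \<le> M" if "p \<in> prime_factors C" for p
  proof -
    have pp: "prime p" and pd: "p dvd C" using that by auto
    have "C dvd fact (2*m)"
      unfolding C_def using binomial_fact_lemma[of m "2*m"] by (metis dvd_triv_right le_add2 mult_2)
    hence "p dvd fact (2*m)" using pd by (rule dvd_trans[rotated])
    hence "p \<le> 2*m" using prime_dvd_fact_iff[OF pp] by simp
    thus "p \<le> M" using nex pp unfolding m_def by (meson not_le)
  qed
  have "C = (\<Prod>p\<in>prime_factors C. p ^ multiplicity p C)"
    using prod_prime_factors[OF C0] by simp
  also have "\<dots> \<le> (2*m) ^ M"
  proof (rule prod_le_power)
    fix p assume "p \<in> prime_factors C"
    hence "prime p" by auto
    thus "0 \<le> p ^ multiplicity p C \<and> p ^ multiplicity p C \<le> 2*m"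
      using binom_mult_bound[OF _ m1] unfolding C_def by auto
  next
    have "prime_factors C \<subseteq> {1..M}"
    proof
      fix x assume x: "x \<in> prime_factors C"
      hence "prime x" by (rule in_prime_factors_imp_prime)
      hence "1 \<le> x" using prime_gt_0_nat[of x] by linarith
      thus "x \<in> {1..M}" using small[OF x] by simp
    qed
    thus "card (prime_factors C) \<le> M" using card_mono[of "{1..M}"] by fastforce
  next
    show "1 \<le> 2*m" using m1 by simp
  qed
  finally have "C \<le> (2*m)^M" .
  moreover have "2 ^ m \<le> C" unfolding C_def by (rule central_binom_lower)
  moreover have "(2*m)^M < 2^m" unfolding m_def using pow_ineq[OF M] .
  ultimately show False by linarith
qed


lemma coeff_lin_mult: "coeff ([:-c, 1:] * g) j = - c * coeff g j + (case j of 0 \<Rightarrow> 0 | Suc k \<Rightarrow> coeff g k)"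
  for c :: int
  by (simp add: coeff_pCons)

lemma roots_mod_bound:
  fixes p :: nat and Q :: "int poly"
  assumes p: "prime p" and nz: "\<exists>j. \<not> int p dvd coeff Q j"
  shows "card {x\<in>{0..<p}. int p dvd poly Q (int x)} \<le> degree Q"
  using nz
proof (induction "degree Q" arbitrary: Q)
  case 0
  have "{x\<in>{0..<p}. int p dvd poly Q (int x)} = {}"
  proof (rule ccontr)
    assume "{x\<in>{0..<p}. int p dvd poly Q (int x)} \<noteq> {}"
    then obtain x where x: "int p dvd poly Q (int x)" by auto
    have Qc: "Q = [:coeff Q 0:]" using 0 by (metis degree_0_id)
    then have "poly Q (int x) = coeff Q 0" by (metis poly_pCons poly_0 mult_zero_right add.right_neutral)
    with x have d0: "int p dvd coeff Q 0" by simp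
    from "0.prems" obtain j where j: "\<not> int p dvd coeff Q j" by blast
    have "coeff Q j = 0" if "j > 0" using that "0.hyps" by (intro coeff_eq_0) simp
    with d0 j show False by (cases "j = 0") auto
  qed
  then show ?case by (simp only: card.empty)
next
  case (Suc d Q)
  show ?case
  proof (cases "{x\<in>{0..<p}. int p dvd poly Q (int x)} = {}")
    case True then show ?thesis by (simp only: card.empty)
  next
    case False
    then obtain x0 where x0: "x0 < p" "int p dvd poly Q (int x0)" by auto
    define g where "g = synthetic_div Q (int x0)"
    have Qeq: "Q = [:- int x0, 1:] * g + [:poly Q (int x0):]"
      unfolding g_def by (rule synthetic_div_correct'[symmetric])
    have dg: "degree g = d" unfolding g_def using Suc.hyps(2) by (simp add: degree_synthetic_div)
    have gnz: "\<exists>j. \<not> int p dvd coeff g j"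
    proof (rule ccontr)
      assume "\<not> ?thesis"
      hence all: "\<And>j. int p dvd coeff g j" by blast
      have "int p dvd coeff Q j" for j
      proof -
        have "coeff Q j = coeff ([:- int x0, 1:] * g) j + coeff [:poly Q (int x0):] j"
          by (subst Qeq) simp
        also have "\<dots> = - int x0 * coeff g j + (case j of 0 \<Rightarrow> 0 | Suc k \<Rightarrow> coeff g k)
                         + (if j = 0 then poly Q (int x0) else 0)"
          by (simp add: coeff_lin_mult coeff_pCons split: nat.splits)
        finally show ?thesis using all x0(2) by (auto split: nat.splits)
      qed
      with Suc.prems show False by blast
    qed
    have IH: "card {x\<in>{0..<p}. int p dvd poly g (int x)} \<le> d"
      using Suc.hyps(1)[of g] dg gnz by simp
    have pi: "prime (int p)" using p by simp
    have sub: "{x\<in>{0..<p}. int p dvd poly Q (int x)} \<subseteq> insert x0 {x\<in>{0..<p}. int p dvd poly g (int x)}"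
    proof
      fix x assume xin: "x \<in> {x\<in>{0..<p}. int p dvd poly Q (int x)}"
      show "x \<in> insert x0 {x\<in>{0..<p}. int p dvd poly g (int x)}"
      proof (cases "x = x0")
        case False
        define c where "c = poly Q (int x0)"
        have "poly Q (int x) = poly ([:- int x0, 1:] * g + [:c:]) (int x)"
          using arg_cong[where f="\<lambda>q. poly q (int x)", OF Qeq] unfolding c_def .
        also have "\<dots> = (int x - int x0) * poly g (int x) + c" by (simp add: algebra_simps)
        finally have e: "poly Q (int x) = (int x - int x0) * poly g (int x) + c" .
        have "int p dvd poly Q (int x)" "int p dvd c" using xin x0(2) unfolding c_def by auto
        hence "int p dvd (int x - int x0) * poly g (int x) + c" using e by simp
        hence "int p dvd (int x - int x0) * poly g (int x)"
          using \<open>int p dvd c\<close> by (simp add: dvd_add_left_iff)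
        moreover have "\<not> int p dvd (int x - int x0)"
        proof
          assume "int p dvd (int x - int x0)"
          moreover have "\<bar>int x - int x0\<bar> < int p" using xin x0(1) by auto
          moreover have "int x - int x0 \<noteq> 0" using False by simp
          ultimately show False by (metis dvd_imp_le_int not_le abs_of_nat)
        qed
        ultimately have "int p dvd poly g (int x)" using pi prime_dvd_mult_iff by blast
        thus ?thesis using xin by simp
      qed simp
    qed
    have "card {x\<in>{0..<p}. int p dvd poly Q (int x)} \<le> card (insert x0 {x\<in>{0..<p}. int p dvd poly g (int x)})"
      by (rule card_mono[OF _ sub]) simp
    also have "\<dots> \<le> Suc (card {x\<in>{0..<p}. int p dvd poly g (int x)})" by (simp add: card_insert_if)
    finally show ?thesis using IH Suc.hyps(2) by linarith
  qed
qed


fun val :: "bool list \<Rightarrow> nat" where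
  "val [] = 0"
| "val (b # bs) = (if b then 1 else 0) + 2 * val bs"

fun bits :: "nat \<Rightarrow> nat \<Rightarrow> bool list" where
  "bits 0 x = []"
| "bits (Suc w) x = odd x # bits w (x div 2)"

lemma length_bits[simp]: "length (bits w x) = w"
  by (induction w arbitrary: x) auto

lemma val_bits: "val (bits w x) = x mod 2 ^ w"
proof (induction w arbitrary: x)
  case 0 then show ?case by simp
next
  case (Suc w)
  have "x mod 2 ^ Suc w = x mod 2 + 2 * (x div 2 mod 2 ^ w)"
    by (simp add: mod_mult2_eq mult.commute)
  then show ?case using Suc by (auto simp: odd_iff_mod_2_eq_one)
qed

lemma val_less: "val xs < 2 ^ length xs"
  by (induction xs) auto

lemma val_inj: "length xs = length ys \<Longrightarrow> val xs = val ys \<Longrightarrow> xs = ys"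
proof (induction xs arbitrary: ys)
  case Nil then show ?case by simp
next
  case (Cons b bs)
  then obtain c cs where ys: "ys = c # cs" by (cases ys) auto
  from Cons.prems ys have e: "(if b then 1 else 0) + 2 * val bs = (if c then 1 else (0::nat)) + 2 * val cs" by simp
  hence "b = c" by (cases b; cases c) presburger+
  with e have "val bs = val cs" by simp
  with Cons.IH[of cs] Cons.prems ys \<open>b = c\<close> show ?case by simp
qed

definition fld :: "nat \<Rightarrow> bool list \<Rightarrow> nat \<Rightarrow> nat" where
  "fld w s i = val (take w (drop (i * w) s))"

definition enc5 :: "nat \<Rightarrow> nat \<Rightarrow> nat \<Rightarrow> nat \<Rightarrow> nat \<Rightarrow> nat \<Rightarrow> bool list" where
  "enc5 w x0 x1 x2 x3 x4 = bits w x0 @ bits w x1 @ bits w x2 @ bits w x3 @ bits w x4"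

lemma length_enc5[simp]: "length (enc5 w x0 x1 x2 x3 x4) = 5 * w"
  by (simp add: enc5_def)

lemma fld_enc5:
  assumes "x0 < 2^w" "x1 < 2^w" "x2 < 2^w" "x3 < 2^w" "x4 < 2^w"
  shows "fld w (enc5 w x0 x1 x2 x3 x4) 0 = x0" "fld w (enc5 w x0 x1 x2 x3 x4) 1 = x1"
        "fld w (enc5 w x0 x1 x2 x3 x4) 2 = x2" "fld w (enc5 w x0 x1 x2 x3 x4) 3 = x3"
        "fld w (enc5 w x0 x1 x2 x3 x4) 4 = x4"
  using assms by (simp_all add: fld_def enc5_def val_bits numeral_eq_Suc drop_append
                   take_append)


definition Lg :: "nat \<Rightarrow> nat" where "Lg n = (LEAST j. n < 2 ^ j)"

lemma Lg_gt: "n < 2 ^ Lg n"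
  unfolding Lg_def by (rule LeastI[of _ n]) (rule less_exp)

lemma Lg_le: assumes "n \<ge> 1" shows "2 ^ (Lg n - 1) \<le> n"
proof (cases "Lg n = 0")
  case True then show ?thesis using assms by simp
next
  case False
  hence "Lg n - 1 < Lg n" by simp
  hence "\<not> n < 2 ^ (Lg n - 1)" unfolding Lg_def by (rule not_less_Least)
  thus ?thesis by simp
qed

lemma Lg_real: assumes "n \<ge> 1" shows "real (Lg n) \<le> log 2 (real n) + 1"
proof -
  have "real (Lg n - 1) \<le> log 2 (real n)"
    by (rule le_log_of_power) (use Lg_le[OF assms] in \<open>simp_all add: of_nat_le_iff[symmetric]\<close>)
  thus ?thesis by linarith
qed

definition K :: "nat \<Rightarrow> nat" where "K n = 2 * Lg n + 2"
definition Wd :: "nat \<Rightarrow> nat \<Rightarrow> nat" where "Wd c n = 3 * K n + 1 + c * Lg n"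
definition LL :: "nat \<Rightarrow> nat \<Rightarrow> nat" where "LL c n = 5 * Wd c n"

lemma LL_bigo: "(\<lambda>n. real (LL c n)) \<in> O(\<lambda>n. ln (real n))"
proof (rule bigoI[where c = "real (125 + 15 * c)"])
  show "\<forall>\<^sub>F n in at_top. norm (real (LL c n)) \<le> real (125 + 15 * c) * norm (ln (real n))"
  proof (rule eventually_at_top_linorderI[of 3])
    fix n :: nat assume n: "n \<ge> 3"
    have ln1: "ln (real n) \<ge> 1"
    proof -
      have "exp 1 \<le> (3::real)" using exp_le by simp
      also have "\<dots> \<le> real n" using n by simp
      finally have "exp 1 \<le> real n" .
      hence "ln (exp 1) \<le> ln (real n)" using n by (subst ln_le_cancel_iff) auto
      thus ?thesis by simp
    qed
    have e12: "exp (1/2::real) \<le> 2"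
    proof -
      have "exp (1/2::real) * exp (1/2) = exp 1" by (simp flip: exp_add)
      also have "\<dots> \<le> 3" using exp_le by simp
      finally have "exp (1/2::real) ^ 2 \<le> 2 ^ 2" by (simp add: power2_eq_square)
      thus ?thesis by (rule power2_le_imp_le) simp
    qed
    have "ln (exp (1/2::real)) \<le> ln 2" using e12 by (subst ln_le_cancel_iff) auto
    hence ln2: "ln (2::real) \<ge> 1/2" by simp
    have "log 2 (real n) = ln (real n) / ln 2" by (simp add: log_def)
    also have "\<dots> \<le> 2 * ln (real n)"
    proof -
      have "ln (real n) \<le> (2 * ln (real n)) * ln 2"
        using ln2 ln1 mult_left_mono[OF ln2, of "2 * ln (real n)"] by simp
      thus ?thesis using ln2 by (simp add: divide_le_eq)
    qed
    finally have L3: "real (Lg n) \<le> 3 * ln (real n)" using Lg_real[of n] n ln1 by linarith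
    have "real (LL c n) = real (30 + 5*c) * real (Lg n) + 35"
      unfolding LL_def Wd_def K_def by (simp add: algebra_simps)
    also have "\<dots> \<le> real (30 + 5*c) * (3 * ln (real n)) + 35 * ln (real n)"
      using mult_left_mono[OF L3, of "real (30 + 5*c)"] ln1 by linarith
    also have "\<dots> = real (125 + 15 * c) * ln (real n)" by (simp add: algebra_simps)
    finally show "norm (real (LL c n)) \<le> real (125 + 15 * c) * norm (ln (real n))" using ln1 by simp
  qed
qed


lemma telescope:
  fixes S f q :: "nat \<Rightarrow> nat" and p :: nat
  assumes fin: "finite V" and R: "R \<in> V" and qV: "\<And>v. v \<in> V \<Longrightarrow> v \<noteq> R \<Longrightarrow> q v \<in> V"
  and eq: "\<And>u. u \<in> V \<Longrightarrow> [S u = f u + (\<Sum>v\<in>{v\<in>V. v \<noteq> R \<and> q v = u}. S v)] (mod p)"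
  shows "[S R = (\<Sum>u\<in>V. f u)] (mod p)"
proof -
  have "(\<Sum>u\<in>V. \<Sum>v\<in>{v\<in>V. v \<noteq> R \<and> q v = u}. S v) = (\<Sum>u\<in>V. \<Sum>v\<in>V. if v \<noteq> R \<and> q v = u then S v else 0)"
    using fin by (intro sum.cong[OF refl]) (simp add: sum.inter_filter)
  also have "\<dots> = (\<Sum>v\<in>V. \<Sum>u\<in>V. if v \<noteq> R \<and> q v = u then S v else 0)"
    by (rule sum.swap)
  also have "\<dots> = (\<Sum>v\<in>V. if v \<noteq> R then S v else 0)"
  proof (intro sum.cong refl)
    fix v assume v: "v \<in> V"
    show "(\<Sum>u\<in>V. if v \<noteq> R \<and> q v = u then S v else 0) = (if v \<noteq> R then S v else 0)"
    proof (cases "v = R")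
      case False
      have "(\<Sum>u\<in>V. if v \<noteq> R \<and> q v = u then S v else 0) = (\<Sum>u\<in>V. if q v = u then S v else 0)"
        using False by simp
      also have "\<dots> = S v" using sum.delta[OF fin, of "q v" "\<lambda>_. S v"] qV[OF v False]
        by (simp add: eq_commute)
      finally show ?thesis using False by simp
    qed simp
  qed
  also have "\<dots> = (\<Sum>v\<in>V - {R}. S v)"
    using fin by (simp add: sum.inter_filter[symmetric] set_diff_eq)
  finally have DS: "(\<Sum>u\<in>V. \<Sum>v\<in>{v\<in>V. v \<noteq> R \<and> q v = u}. S v) = (\<Sum>v\<in>V - {R}. S v)" .
  have "[(\<Sum>u\<in>V. S u) = (\<Sum>u\<in>V. f u + (\<Sum>v\<in>{v\<in>V. v \<noteq> R \<and> q v = u}. S v))] (mod p)"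
    by (rule cong_sum) (rule eq)
  also have "(\<Sum>u\<in>V. f u + (\<Sum>v\<in>{v\<in>V. v \<noteq> R \<and> q v = u}. S v)) = (\<Sum>u\<in>V. f u) + (\<Sum>v\<in>V - {R}. S v)"
    by (simp add: sum.distrib DS)
  also have "(\<Sum>u\<in>V. S u) = S R + (\<Sum>v\<in>V - {R}. S v)"
    using fin R by (simp add: sum.remove)
  finally have "[S R + (\<Sum>v\<in>V - {R}. S v) = (\<Sum>u\<in>V. f u) + (\<Sum>v\<in>V - {R}. S v)] (mod p)" .
  hence "[int (S R) + int (\<Sum>v\<in>V - {R}. S v) = int (\<Sum>u\<in>V. f u) + int (\<Sum>v\<in>V - {R}. S v)] (mod int p)"
    by (simp add: cong_int_iff[symmetric] del: of_nat_sum)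
  hence "[int (S R) = int (\<Sum>u\<in>V. f u)] (mod int p)" by (simp only: cong_add_rcancel)
  thus ?thesis by (simp only: cong_int_iff)
qed


lemma bad_bound:
  fixes a :: "nat \<Rightarrow> nat" and p n :: nat
  assumes p: "prime p" and np: "n < p" and fin: "finite V" and cV: "card V = n"
  and av: "\<forall>u\<in>V. a u \<in> {1..n}" and ni: "\<not> inj_on a V"
  shows "card {x\<in>{0..<p}. (\<Sum>u\<in>V. x ^ a u) mod p = (\<Sum>i=1..n. x ^ i) mod p} \<le> n"
proof -
  define Q :: "int poly" where "Q = (\<Sum>u\<in>V. monom 1 (a u)) - (\<Sum>i\<in>{1..n}. monom 1 i)"
  have polyQ: "poly Q (int x) = int (\<Sum>u\<in>V. x ^ a u) - int (\<Sum>i=1..n. x ^ i)" for x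
    unfolding Q_def by (simp add: poly_sum poly_monom)
  have seteq: "{x\<in>{0..<p}. (\<Sum>u\<in>V. x ^ a u) mod p = (\<Sum>i=1..n. x ^ i) mod p}
      = {x\<in>{0..<p}. int p dvd poly Q (int x)}"
  proof -
    have "(A::nat) mod p = B mod p \<longleftrightarrow> int p dvd int A - int B" for A B
    proof -
      have "A mod p = B mod p \<longleftrightarrow> [A = B] (mod p)" by (simp add: cong_def)
      also have "\<dots> \<longleftrightarrow> [int A = int B] (mod int p)" by (simp add: cong_int_iff)
      also have "\<dots> \<longleftrightarrow> int p dvd int A - int B" by (rule cong_iff_dvd_diff)
      finally show ?thesis .
    qed
    thus ?thesis unfolding polyQ by simp
  qed
  have coeffQ: "coeff Q j = (\<Sum>u\<in>V. if a u = j then 1 else 0) - (\<Sum>i\<in>{1..n}. if i = j then 1 else 0)" for j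
    unfolding Q_def by (simp add: coeff_sum)
  have degQ: "degree Q \<le> n"
  proof (rule degree_le, intro allI impI)
    fix j assume j: "n < j"
    have "(\<Sum>u\<in>V. if a u = j then 1 else (0::int)) = 0"
      using av j by (intro sum.neutral) fastforce
    moreover have "(\<Sum>i\<in>{1..n}. if i = j then 1 else (0::int)) = 0"
      using j by (intro sum.neutral) auto
    ultimately show "coeff Q j = 0" unfolding coeffQ by simp
  qed
  obtain u v where uv: "u \<in> V" "v \<in> V" "u \<noteq> v" "a u = a v"
    using ni unfolding inj_on_def by blast
  define j where "j = a u"
  have j1n: "j \<in> {1..n}" using av uv unfolding j_def by auto
  define C where "C = {w\<in>V. a w = j}"
  have "{u, v} \<subseteq> C" using uv unfolding C_def j_def by auto
  hence c2: "card C \<ge> 2" using card_mono[of C "{u,v}"] fin uv(3) unfolding C_def by auto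
  have cn: "card C \<le> n" using card_mono[OF fin, of C] cV unfolding C_def by auto
  have s1: "(\<Sum>w\<in>V. if a w = j then 1 else (0::int)) = int (card C)"
    unfolding C_def using fin by (simp add: sum.inter_filter[symmetric])
  have s2: "(\<Sum>i\<in>{1..n}. if i = j then 1 else (0::int)) = 1"
    using j1n by simp
  have cj: "coeff Q j = int (card C) - 1" unfolding coeffQ s1 s2 ..
  have nz: "\<not> int p dvd coeff Q j"
  proof
    assume "int p dvd coeff Q j"
    moreover have "coeff Q j > 0" using cj c2 by simp
    ultimately have "int p \<le> coeff Q j" by (rule zdvd_imp_le)
    thus False using cj cn np by simp
  qed
  have "card {x\<in>{0..<p}. int p dvd poly Q (int x)} \<le> degree Q"
    using roots_mod_bound[OF p] nz by blast
  thus ?thesis unfolding seteq using degQ by linarith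
qed


lemma card_lists_bool: "card {xs :: bool list. length xs = k} = 2 ^ k"
proof -
  have "{xs :: bool list. length xs = k} = {xs. set xs \<subseteq> UNIV \<and> length xs = k}" by simp
  thus ?thesis using card_lists_length_eq[of "UNIV :: bool set" k] by simp
qed

lemma finite_lists_bool: "finite {xs :: bool list. length xs = k}"
  using card_lists_bool[of k] by (metis card.infinite power_not_zero zero_neq_numeral)

lemma card_coin_space: "finite V \<Longrightarrow> card (coin_space V k) = (2 ^ k) ^ card V"
  unfolding coin_space_def by (simp add: card_PiE card_lists_bool)

lemma finite_coin_space: "finite V \<Longrightarrow> finite (coin_space V k)"
  unfolding coin_space_def by (intro finite_PiE finite_lists_bool)

lemma count_bound:
  assumes fin: "finite V" and R: "R \<in> V" and fB: "finite Bad"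
  shows "card {\<rho> \<in> coin_space V k. val (\<rho> R) \<in> Bad} \<le> card Bad * (2 ^ k) ^ (card V - 1)"
proof -
  define B where "B = (\<lambda>_::nat. {xs :: bool list. length xs = k})"
  define B' where "B' = B(R := {xs \<in> B R. val xs \<in> Bad})"
  have eq: "{\<rho> \<in> coin_space V k. val (\<rho> R) \<in> Bad} = PiE V B'"
  proof (intro set_eqI iffI)
    fix x assume "x \<in> {\<rho> \<in> coin_space V k. val (\<rho> R) \<in> Bad}"
    thus "x \<in> PiE V B'" unfolding coin_space_def B'_def B_def using R by (auto simp: PiE_iff)
  next
    fix x assume x: "x \<in> PiE V B'"
    hence "\<forall>i\<in>V. x i \<in> B' i" "x \<in> extensional V" by (auto simp: PiE_iff)
    thus "x \<in> {\<rho> \<in> coin_space V k. val (\<rho> R) \<in> Bad}"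
      unfolding coin_space_def B'_def B_def using R
      by (simp add: PiE_iff) (metis (mono_tags, lifting) mem_Collect_eq)
  qed
  have "card (PiE V B') = (\<Prod>v\<in>V. card (B' v))" using fin by (rule card_PiE)
  also have "\<dots> = card (B' R) * (\<Prod>v\<in>V - {R}. card (B' v))" using fin R by (simp add: prod.remove)
  also have "(\<Prod>v\<in>V - {R}. card (B' v)) = (\<Prod>v\<in>V - {R}. 2 ^ k)"
    by (intro prod.cong refl) (simp add: B'_def B_def card_lists_bool)
  also have "\<dots> = (2 ^ k) ^ (card V - 1)" using fin R by simp
  finally have c: "card (PiE V B') = card (B' R) * (2 ^ k) ^ (card V - 1)" .
  have "card (B' R) \<le> card Bad"
  proof -
    have "B' R = {xs. length xs = k \<and> val xs \<in> Bad}" unfolding B'_def B_def by simp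
    moreover have "card {xs. length xs = k \<and> val xs \<in> Bad} \<le> card Bad"
    proof (rule card_inj_on_le[OF _ _ fB])
      show "inj_on val {xs. length xs = k \<and> val xs \<in> Bad}"
      proof (rule inj_onI)
        fix x y assume "x \<in> {xs. length xs = k \<and> val xs \<in> Bad}" "y \<in> {xs. length xs = k \<and> val xs \<in> Bad}" "val x = val y"
        thus "x = y" using val_inj[of x y] by simp
      qed
    qed auto
    ultimately show ?thesis by simp
  qed
  thus ?thesis unfolding eq c by simp
qed


definition PR :: "nat \<Rightarrow> nat" where
  "PR n = (SOME p. prime p \<and> 2 ^ K n < p \<and> p \<le> 2 * (2 ^ K n) ^ 3)"

lemma PR: "prime (PR n) \<and> 2 ^ K n < PR n \<and> PR n \<le> 2 * (2 ^ K n) ^ 3"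
proof -
  have "(4::nat) \<le> 2 ^ K n"
  proof -
    have "(2::nat) ^ 2 \<le> 2 ^ K n" unfolding K_def by (intro power_increasing) auto
    thus ?thesis by simp
  qed
  from prime_in_range[OF this] show ?thesis unfolding PR_def by (rule someI_ex)
qed

definition dec :: "nat \<Rightarrow> nat decision" where
  "dec c n u x \<rho> s nb = (let w = Wd c n; p = PR n; F = fld w in
     (\<forall>(v,t)\<in>set nb. F t 0 = F s 0 \<and> F t 3 = F s 3) \<and>
     (if u = F s 0 then F s 3 = val \<rho> \<and> F s 4 mod p = (\<Sum>i=1..n. F s 3 ^ i) mod p
      else (\<exists>(v,t)\<in>set nb. v = F s 2 \<and> F t 1 < F s 1)) \<and>
     F s 4 mod p = (F s 3 ^ x + sum_list (map (\<lambda>(v,t). if F t 2 = u \<and> v \<noteq> F t 0 then F t 4 else 0) nb)) mod p)"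

lemma vi_edge: "valid_instance c n V E port \<Longrightarrow> E u v \<Longrightarrow> u \<in> V \<and> v \<in> V \<and> E v u"
  unfolding valid_instance_def by blast

lemma vi_port: "valid_instance c n V E port \<Longrightarrow> u \<in> V \<Longrightarrow> distinct (port u) \<and> set (port u) = {v. E u v}"
  unfolding valid_instance_def by blast

lemma accept_root:
  assumes vi: "valid_instance c n V E port" and acc: "all_accept (dec c) n V port a \<rho> \<pi>"
  shows "\<exists>R\<in>V. (\<Sum>u\<in>V. val (\<rho> R) ^ a u) mod PR n = (\<Sum>i=1..n. val (\<rho> R) ^ i) mod PR n"
proof -
  define p where "p = PR n"
  define F where "F u i = fld (Wd c n) (\<pi> u) i" for u i
  have fin: "finite V" and Vne: "V \<noteq> {}" and conn: "\<forall>u\<in>V. \<forall>v\<in>V. (u, v) \<in> {(x, y). E x y}\<^sup>*"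
    using vi unfolding valid_instance_def by auto
  have D: "dec c n u (a u) (\<rho> u) (\<pi> u) (map (\<lambda>v. (v, \<pi> v)) (port u))" if "u \<in> V" for u
    using acc that unfolding all_accept_def by blast
  have A1: "F v 0 = F u 0 \<and> F v 3 = F u 3" if "u \<in> V" "E u v" for u v
  proof -
    have "v \<in> set (port u)" using vi_port[OF vi that(1)] that(2) by auto
    thus ?thesis using D[OF that(1)] unfolding dec_def Let_def F_def by auto
  qed
  have A2: "F u 3 = val (\<rho> u) \<and> F u 4 mod p = (\<Sum>i=1..n. F u 3 ^ i) mod p" if "u \<in> V" "u = F u 0" for u
    using D[OF that(1)] that(2) unfolding dec_def Let_def F_def p_def by auto
  have A3: "\<exists>v. E u v \<and> v = F u 2 \<and> F v 1 < F u 1" if "u \<in> V" "u \<noteq> F u 0" for u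
  proof -
    from D[OF that(1)] that(2) obtain v where "v \<in> set (port u)" "v = F u 2" "F v 1 < F u 1"
      unfolding dec_def Let_def F_def by auto
    thus ?thesis using vi_port[OF vi that(1)] by auto
  qed
  have A4: "F u 4 mod p = (F u 3 ^ a u + sum_list (map (\<lambda>v. if F v 2 = u \<and> v \<noteq> F v 0 then F v 4 else 0) (port u))) mod p"
    if "u \<in> V" for u
    using D[OF that] unfolding dec_def Let_def F_def p_def by (simp add: o_def)
  obtain u0 where u0: "u0 \<in> V" using Vne by blast
  define R where "R = F u0 0"
  define r where "r = F u0 3"
  have cst: "F u 0 = R \<and> F u 3 = r" if "u \<in> V" for u
  proof -
    have "(u0, u) \<in> {(x, y). E x y}\<^sup>*" using conn u0 that by blast
    thus ?thesis
    proof (induction rule: rtrancl_induct)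
      case base then show ?case unfolding R_def r_def by simp
    next
      case (step y z)
      hence "E y z" by simp
      hence "y \<in> V" using vi_edge[OF vi] by blast
      then show ?case using A1[OF \<open>y \<in> V\<close> \<open>E y z\<close>] step.IH by simp
    qed
  qed
  obtain m where m: "m \<in> V" "\<And>v. v \<in> V \<Longrightarrow> F m 1 \<le> F v 1"
    using ex_has_least_nat[of "\<lambda>x. x \<in> V" u0 "\<lambda>x. F x 1"] u0 by blast
  have mR: "m = R"
  proof (rule ccontr)
    assume "m \<noteq> R"
    hence "m \<noteq> F m 0" using cst[OF m(1)] by simp
    then obtain v where "E m v" "F v 1 < F m 1" using A3[OF m(1)] by blast
    moreover have "v \<in> V" using vi_edge[OF vi \<open>E m v\<close>] by blast
    ultimately show False using m(2) by fastforce
  qed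
  have RV: "R \<in> V" using m(1) mR by simp
  have RR: "R = F R 0" using cst[OF RV] by simp
  have rv: "r = val (\<rho> R)" using A2[OF RV RR] cst[OF RV] by simp
  have root: "F R 4 mod p = (\<Sum>i=1..n. r ^ i) mod p" using A2[OF RV RR] cst[OF RV] by simp
  define ch where "ch u = {v\<in>V. v \<noteq> R \<and> F v 2 = u}" for u
  have qV: "F v 2 \<in> V" if vV: "v \<in> V" and vR: "v \<noteq> R" for v
  proof -
    have "v \<noteq> F v 0" using cst[OF vV] vR by simp
    hence "E v (F v 2)" using A3[OF vV] by blast
    thus ?thesis using vi_edge[OF vi] by blast
  qed
  have eq: "[F u 4 = r ^ a u + (\<Sum>v\<in>ch u. F v 4)] (mod p)" if u: "u \<in> V" for u
  proof -
    have "sum_list (map (\<lambda>v. if F v 2 = u \<and> v \<noteq> F v 0 then F v 4 else 0) (port u))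
        = (\<Sum>v\<in>{v. E u v}. if F v 2 = u \<and> v \<noteq> F v 0 then F v 4 else 0)"
      using vi_port[OF vi u] by (simp add: sum_list_distinct_conv_sum_set)
    also have "\<dots> = (\<Sum>v\<in>{v. E u v}. if F v 2 = u \<and> v \<noteq> R then F v 4 else 0)"
      using cst vi_edge[OF vi] by (intro sum.cong refl) auto
    also have "\<dots> = (\<Sum>v\<in>{v\<in>{v. E u v}. F v 2 = u \<and> v \<noteq> R}. F v 4)"
    proof -
      have "finite {v. E u v}" using vi_edge[OF vi] fin by (metis (no_types, lifting) mem_Collect_eq rev_finite_subset subsetI)
      from sum.inter_filter[OF this, of "\<lambda>v. F v 4" "\<lambda>v. F v 2 = u \<and> v \<noteq> R"]
      show ?thesis by simp
    qed
    also have "{v\<in>{v. E u v}. F v 2 = u \<and> v \<noteq> R} = ch u"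
    proof (intro set_eqI iffI)
      fix v assume "v \<in> {v\<in>{v. E u v}. F v 2 = u \<and> v \<noteq> R}"
      thus "v \<in> ch u" unfolding ch_def using vi_edge[OF vi] by auto
    next
      fix v assume v: "v \<in> ch u"
      hence "v \<in> V" "v \<noteq> R" "F v 2 = u" unfolding ch_def by auto
      moreover have "v \<noteq> F v 0" using cst[OF \<open>v \<in> V\<close>] \<open>v \<noteq> R\<close> by simp
      ultimately have "E v u" using A3 by blast
      hence "E u v" using vi_edge[OF vi] by blast
      thus "v \<in> {v\<in>{v. E u v}. F v 2 = u \<and> v \<noteq> R}" using \<open>v \<noteq> R\<close> \<open>F v 2 = u\<close> by simp
    qed
    finally have "sum_list (map (\<lambda>v. if F v 2 = u \<and> v \<noteq> F v 0 then F v 4 else 0) (port u)) = (\<Sum>v\<in>ch u. F v 4)" .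
    thus ?thesis using A4[OF u] cst[OF u] unfolding cong_def by simp
  qed
  have "[F R 4 = (\<Sum>u\<in>V. r ^ a u)] (mod p)"
    by (rule telescope[OF fin RV, of "\<lambda>v. F v 2" "\<lambda>u. F u 4"]) (use qV eq in \<open>auto simp: ch_def\<close>)
  hence "(\<Sum>u\<in>V. r ^ a u) mod p = (\<Sum>i=1..n. r ^ i) mod p" using root unfolding cong_def by simp
  thus ?thesis using RV rv unfolding p_def by blast
qed


lemma n_lt_T: "3 * n * n < 2 ^ K n"
proof -
  have "n < 2 ^ Lg n" by (rule Lg_gt)
  hence "n * n < 2 ^ Lg n * 2 ^ Lg n" by (intro mult_strict_mono) auto
  hence "3 * (n * n) < 4 * (2 ^ Lg n * 2 ^ Lg n)" by linarith
  also have "4 * (2 ^ Lg n * 2 ^ Lg n) = (2::nat) ^ K n"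
    unfolding K_def by (simp add: power_add power_mult_distrib mult_2 flip: power_add)
  finally show ?thesis by (simp add: mult.assoc)
qed

lemma soundness:
  assumes vi: "valid_instance c n V E port" and adm: "perm_adm n V E a" and ni: "\<not> Permutation n V E a"
  shows "accept_prob (dec c) (K n) n V port a P < 1/3"
proof -
  define p where "p = PR n"
  define k where "k = K n"
  define T where "T = (2::nat) ^ k"
  have fin: "finite V" and cV: "card V = n" and Vne: "V \<noteq> {}"
    using vi unfolding valid_instance_def by auto
  have n1: "n \<ge> 1" using fin Vne cV card_gt_0_iff[of V] by simp
  have pp: "prime p" and Tp: "T < p" using PR[of n] unfolding p_def T_def k_def by auto
  have np: "n < p"
  proof -
    have "(2::nat) ^ Lg n \<le> 2 ^ (2 * Lg n + 2)" by (intro power_increasing) auto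
    thus ?thesis using Lg_gt[of n] Tp unfolding T_def k_def K_def by linarith
  qed
  define Bad where "Bad = {x\<in>{0..<p}. (\<Sum>u\<in>V. x ^ a u) mod p = (\<Sum>i=1..n. x ^ i) mod p}"
  have fBad: "finite Bad" unfolding Bad_def by simp
  have cBad: "card Bad \<le> n"
    unfolding Bad_def using bad_bound[OF pp np fin cV] adm ni
    unfolding perm_adm_def Permutation_def by blast
  define A where "A = {\<rho> \<in> coin_space V k. all_accept (dec c) n V port a \<rho> (P \<rho>)}"
  have sub: "A \<subseteq> (\<Union>R\<in>V. {\<rho> \<in> coin_space V k. val (\<rho> R) \<in> Bad})"
  proof
    fix \<rho> assume "\<rho> \<in> A"
    hence cs: "\<rho> \<in> coin_space V k" and acc: "all_accept (dec c) n V port a \<rho> (P \<rho>)" unfolding A_def by auto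
    obtain R where R: "R \<in> V" "(\<Sum>u\<in>V. val (\<rho> R) ^ a u) mod p = (\<Sum>i=1..n. val (\<rho> R) ^ i) mod p"
      using accept_root[OF vi acc] unfolding p_def by blast
    have "length (\<rho> R) = k" using cs R(1) unfolding coin_space_def by (auto simp: PiE_iff)
    hence "val (\<rho> R) < T" using val_less[of "\<rho> R"] unfolding T_def by simp
    hence "val (\<rho> R) \<in> Bad" using R(2) Tp unfolding Bad_def by simp
    thus "\<rho> \<in> (\<Union>R\<in>V. {\<rho> \<in> coin_space V k. val (\<rho> R) \<in> Bad})" using R(1) cs by blast
  qed
  have "card A \<le> card (\<Union>R\<in>V. {\<rho> \<in> coin_space V k. val (\<rho> R) \<in> Bad})"
    by (rule card_mono[OF _ sub]) (use fin finite_coin_space in auto)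
  also have "\<dots> \<le> (\<Sum>R\<in>V. card {\<rho> \<in> coin_space V k. val (\<rho> R) \<in> Bad})"
    by (rule card_UN_le[OF fin])
  also have "\<dots> \<le> (\<Sum>R\<in>V. n * T ^ (n - 1))"
  proof (rule sum_mono)
    fix R assume "R \<in> V"
    have "card {\<rho> \<in> coin_space V k. val (\<rho> R) \<in> Bad} \<le> card Bad * T ^ (card V - 1)"
      using count_bound[OF fin \<open>R \<in> V\<close> fBad] unfolding T_def by simp
    also have "\<dots> \<le> n * T ^ (n - 1)" using cBad cV by simp
    finally show "card {\<rho> \<in> coin_space V k. val (\<rho> R) \<in> Bad} \<le> n * T ^ (n - 1)" .
  qed
  also have "\<dots> = n * (n * T ^ (n - 1))" using cV by simp
  finally have cA: "card A \<le> n * (n * T ^ (n - 1))" .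
  have cCS: "card (coin_space V k) = T * T ^ (n - 1)"
    using card_coin_space[OF fin, of k] cV n1 unfolding T_def by (simp add: power_eq_if)
  have "3 * card A \<le> (3 * n * n) * T ^ (n - 1)" using cA by (simp add: mult.assoc)
  also have "\<dots> < T * T ^ (n - 1)"
    using n_lt_T[of n] unfolding T_def k_def by (intro mult_strict_right_mono) auto
  finally have lt: "3 * card A < card (coin_space V k)" using cCS by simp
  have pos: "card (coin_space V k) > 0" using cCS unfolding T_def by simp
  have "accept_prob (dec c) (K n) n V port a P = real (card A) / real (card (coin_space V k))"
    unfolding accept_prob_def A_def k_def ..
  also have "\<dots> < 1/3" using lt pos by (simp add: divide_less_eq)
  finally show ?thesis .
qed


lemma tree_sums:
  fixes f q d :: "nat \<Rightarrow> nat"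
  assumes qd: "\<And>v. v \<in> V \<Longrightarrow> v \<noteq> R \<Longrightarrow> q v \<in> V \<and> d (q v) < d v"
    and dN: "\<And>v. v \<in> V \<Longrightarrow> d v < N"
  shows "\<exists>S. \<forall>u\<in>V. S u = (f u + (\<Sum>v\<in>{v\<in>V. v \<noteq> R \<and> q v = u}. S v)) mod p"
proof -
  define ch where "ch u = {v\<in>V. v \<noteq> R \<and> q v = u}" for u
  have chd: "d u < d v" if "v \<in> ch u" for u v
    using that qd unfolding ch_def by auto
  have "\<exists>S. \<forall>u\<in>V. N - m \<le> d u \<longrightarrow> S u = (f u + (\<Sum>v\<in>ch u. S v)) mod p" for m
  proof (induction m)
    case 0
    then show ?case using dN by (metis diff_zero not_le)
  next
    case (Suc m)
    then obtain S where S: "\<forall>u\<in>V. N - m \<le> d u \<longrightarrow> S u = (f u + (\<Sum>v\<in>ch u. S v)) mod p" by blast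
    define t where "t = N - Suc m"
    define S' where "S' x = (if x \<in> V \<and> d x = t then (f x + (\<Sum>v\<in>ch x. S v)) mod p else S x)" for x
    have "\<forall>u\<in>V. N - Suc m \<le> d u \<longrightarrow> S' u = (f u + (\<Sum>v\<in>ch u. S' v)) mod p"
    proof (intro ballI impI)
      fix u assume u: "u \<in> V" and tu: "N - Suc m \<le> d u"
      have agree: "(\<Sum>v\<in>ch u. S' v) = (\<Sum>v\<in>ch u. S v)"
      proof (rule sum.cong[OF refl])
        fix v assume "v \<in> ch u"
        hence "d v \<noteq> t" using chd tu unfolding t_def by fastforce
        thus "S' v = S v" unfolding S'_def by simp
      qed
      show "S' u = (f u + (\<Sum>v\<in>ch u. S' v)) mod p"
      proof (cases "d u = t")
        case True
        then show ?thesis unfolding agree using u S'_def by simp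
      next
        case False
        hence "N - m \<le> d u" using tu unfolding t_def by linarith
        hence "S u = (f u + (\<Sum>v\<in>ch u. S v)) mod p" using S u by blast
        moreover have "S' u = S u" using False unfolding S'_def by simp
        ultimately show ?thesis unfolding agree by simp
      qed
    qed
    then show ?case by blast
  qed
  from this[of N] show ?thesis unfolding ch_def by auto
qed


lemma completeness:
  assumes vi: "valid_instance c n V E port" and adm: "perm_adm n V E a" and inj: "Permutation n V E a"
  shows "\<exists>P. prover_bounded V (K n) (LL c n) P \<and> accept_prob (dec c) (K n) n V port a P > 2/3"
proof -
  have fin: "finite V" and cV: "card V = n" and Vne: "V \<noteq> {}" and Vsub: "V \<subseteq> {..< n ^ c}"
    and conn: "\<forall>u\<in>V. \<forall>v\<in>V. (u, v) \<in> {(x, y). E x y}\<^sup>*"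
    using vi unfolding valid_instance_def by auto
  have n1: "n \<ge> 1" using fin Vne cV card_gt_0_iff[of V] by simp
  have ia: "inj_on a V" using inj unfolding Permutation_def .
  define p where "p = PR n"
  define k where "k = K n"
  define w where "w = Wd c n"
  have pp: "prime p" and kp: "2 ^ k < p" and pk: "p \<le> 2 * (2 ^ k) ^ 3" using PR[of n] unfolding p_def k_def by auto
  have p0: "p > 0" using pp prime_gt_0_nat by blast
  define R0 where "R0 = (SOME u. u \<in> V)"
  have R0V: "R0 \<in> V" unfolding R0_def using Vne by (simp add: some_in_eq)
  define rel where "rel = {(x, y). E x y}"
  define ld where "ld u = (LEAST j. (u, R0) \<in> rel ^^ j)" for u
  have ldex: "(u, R0) \<in> rel ^^ ld u" if "u \<in> V" for u
  proof -
    have "(u, R0) \<in> rel\<^sup>*" using conn that R0V unfolding rel_def by blast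
    then obtain j where "(u, R0) \<in> rel ^^ j" using rtrancl_power by blast
    thus ?thesis unfolding ld_def by (rule LeastI)
  qed
  define par where "par u = (SOME v. E u v \<and> ld v < ld u)" for u
  have parok: "E u (par u) \<and> ld (par u) < ld u" if "u \<in> V" "u \<noteq> R0" for u
  proof -
    have j: "(u, R0) \<in> rel ^^ ld u" by (rule ldex[OF that(1)])
    have "ld u \<noteq> 0"
    proof
      assume "ld u = 0"
      hence "(u, R0) \<in> rel ^^ 0" using j by simp
      thus False using that(2) by simp
    qed
    then obtain i where i: "ld u = Suc i" by (cases "ld u") auto
    then obtain y where y: "(u, y) \<in> rel" "(y, R0) \<in> rel ^^ i" using j relpow_Suc_D2 by metis
    have "ld y \<le> i" unfolding ld_def using y(2) by (rule Least_le)
    hence "\<exists>v. E u v \<and> ld v < ld u" using y(1) i unfolding rel_def by auto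
    thus ?thesis unfolding par_def by (rule someI_ex)
  qed
  define dd where "dd u = card {v\<in>V. ld v < ld u}" for u
  have ddlt: "par u \<in> V \<and> dd (par u) < dd u" if "u \<in> V" "u \<noteq> R0" for u
  proof -
    have pu: "par u \<in> V" using parok[OF that] vi_edge[OF vi] by blast
    have "{v\<in>V. ld v < ld (par u)} \<subset> {v\<in>V. ld v < ld u}"
      using parok[OF that] pu by auto
    hence "dd (par u) < dd u" unfolding dd_def using fin by (intro psubset_card_mono) auto
    thus ?thesis using pu by simp
  qed
  have ddn: "dd u < n" if "u \<in> V" for u
  proof -
    have "{v\<in>V. ld v < ld u} \<subseteq> V - {u}" by auto
    hence "dd u \<le> card (V - {u})" unfolding dd_def using fin by (intro card_mono) auto
    thus ?thesis using cV that fin n1 by simp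
  qed
  define par' where "par' u = (if u = R0 then 0 else par u)" for u
  define ch where "ch u = {v\<in>V. v \<noteq> R0 \<and> par' v = u}" for u
  define r where "r \<rho> = val (\<rho> R0)" for \<rho> :: "nat \<Rightarrow> bool list"
  have exS: "\<exists>S. \<forall>u\<in>V. S u = (r \<rho> ^ a u + (\<Sum>v\<in>ch u. S v)) mod p" for \<rho>
    unfolding ch_def
    by (rule tree_sums[of V R0 par' dd n]) (use ddlt ddn in \<open>auto simp: par'_def\<close>)
  define SS where "SS \<rho> = (SOME S. \<forall>u\<in>V. S u = (r \<rho> ^ a u + (\<Sum>v\<in>ch u. S v)) mod p)" for \<rho>
  have SS: "\<forall>u\<in>V. SS \<rho> u = (r \<rho> ^ a u + (\<Sum>v\<in>ch u. SS \<rho> v)) mod p" for \<rho>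
    unfolding SS_def by (rule someI_ex[OF exS])
  define P where "P \<rho> u = enc5 w R0 (dd u) (par' u) (r \<rho>) (SS \<rho> u)" for \<rho> u
  have pb: "prover_bounded V (K n) (LL c n) P"
    unfolding prover_bounded_def P_def w_def LL_def by simp
  have ncw: "n ^ c \<le> 2 ^ w"
  proof -
    have "n ^ c \<le> (2 ^ Lg n) ^ c" using Lg_gt[of n] by (intro power_mono) auto
    also have "\<dots> = 2 ^ (c * Lg n)" by (metis power_mult mult.commute)
    also have "\<dots> \<le> 2 ^ w" unfolding w_def Wd_def by (intro power_increasing) auto
    finally show ?thesis .
  qed
  have kw: "(2::nat) ^ k \<le> 2 ^ w" unfolding w_def Wd_def k_def by (intro power_increasing) auto
  have pw: "p \<le> 2 ^ w"
  proof -
    have "p \<le> 2 ^ (3 * k + 1)" using pk by (simp add: power_mult[symmetric] power_add mult.commute)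
    also have "\<dots> \<le> 2 ^ w" unfolding w_def Wd_def k_def by (intro power_increasing) auto
    finally show ?thesis .
  qed
  have inV: "v < 2 ^ w" if "v \<in> V" for v using Vsub that ncw by fastforce
  have dec_fld: "fld w (P \<rho> u) 0 = R0 \<and> fld w (P \<rho> u) 1 = dd u \<and> fld w (P \<rho> u) 2 = par' u
      \<and> fld w (P \<rho> u) 3 = r \<rho> \<and> fld w (P \<rho> u) 4 = SS \<rho> u"
    if u: "u \<in> V" and \<rho>: "\<rho> \<in> coin_space V k" for \<rho> u
  proof -
    have b0: "R0 < 2 ^ w" by (rule inV[OF R0V])
    have "(2::nat) ^ Lg n \<le> 2 ^ w" unfolding w_def Wd_def K_def by (intro power_increasing) auto
    hence b1: "dd u < 2 ^ w" using ddn[OF u] Lg_gt[of n] by linarith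
    have b2: "par' u < 2 ^ w" unfolding par'_def using ddlt[OF u] inV by auto
    have "length (\<rho> R0) = k" using \<rho> R0V unfolding coin_space_def by (auto simp: PiE_iff)
    hence "val (\<rho> R0) < 2 ^ k" using val_less[of "\<rho> R0"] by simp
    hence b3: "r \<rho> < 2 ^ w" using kw unfolding r_def by linarith
    have b4: "SS \<rho> u < 2 ^ w" using SS[of \<rho>] u p0 pw by (metis mod_less_divisor order_less_le_trans)
    show ?thesis unfolding P_def using fld_enc5[OF b0 b1 b2 b3 b4] by simp
  qed
  have sumbij: "(\<Sum>u\<in>V. x ^ a u) = (\<Sum>i=1..n. x ^ i)" for x :: nat
  proof -
    have "a ` V \<subseteq> {1..n}" using adm unfolding perm_adm_def by auto
    moreover have "card (a ` V) = card {1..n::nat}" using card_image[OF ia] cV by simp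
    ultimately have "a ` V = {1..n}" by (intro card_subset_eq) auto
    thus ?thesis using sum.reindex[OF ia, of "\<lambda>i. x ^ i"] by simp
  qed
  have allacc: "all_accept (dec c) n V port a \<rho> (P \<rho>)" if \<rho>: "\<rho> \<in> coin_space V k" for \<rho>
    unfolding all_accept_def
  proof
    fix u assume u: "u \<in> V"
    define F where "F t i = fld w t i" for t i
    have Fv: "F (P \<rho> v) 0 = R0 \<and> F (P \<rho> v) 1 = dd v \<and> F (P \<rho> v) 2 = par' v
      \<and> F (P \<rho> v) 3 = r \<rho> \<and> F (P \<rho> v) 4 = SS \<rho> v" if "v \<in> V" for v
      unfolding F_def using dec_fld[OF that \<rho>] .
    have port: "distinct (port u)" "set (port u) = {v. E u v}" using vi_port[OF vi u] by auto
    have nbV: "v \<in> V" if "v \<in> set (port u)" for v using that port vi_edge[OF vi] by auto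
    have c1: "\<forall>(v,t)\<in>set (map (\<lambda>v. (v, P \<rho> v)) (port u)). F t 0 = F (P \<rho> u) 0 \<and> F t 3 = F (P \<rho> u) 3"
      using Fv nbV u by auto
    have c2: "if u = F (P \<rho> u) 0 then F (P \<rho> u) 3 = val (\<rho> u) \<and> F (P \<rho> u) 4 mod p = (\<Sum>i=1..n. F (P \<rho> u) 3 ^ i) mod p
      else (\<exists>(v,t)\<in>set (map (\<lambda>v. (v, P \<rho> v)) (port u)). v = F (P \<rho> u) 2 \<and> F t 1 < F (P \<rho> u) 1)"
    proof (cases "u = R0")
      case True
      have qV: "par' v \<in> V" if "v \<in> V" "v \<noteq> R0" for v
        using ddlt[OF that] that(2) unfolding par'_def by simp
      have eqs: "[SS \<rho> x = r \<rho> ^ a x + (\<Sum>v\<in>{v\<in>V. v \<noteq> R0 \<and> par' v = x}. SS \<rho> v)] (mod p)"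
        if "x \<in> V" for x
      proof -
        have "SS \<rho> x = (r \<rho> ^ a x + (\<Sum>v\<in>ch x. SS \<rho> v)) mod p" using SS[of \<rho>] that by blast
        thus ?thesis unfolding cong_def ch_def by simp
      qed
      have "[SS \<rho> R0 = (\<Sum>u\<in>V. r \<rho> ^ a u)] (mod p)"
        by (rule telescope[OF fin R0V qV eqs])
      hence "SS \<rho> R0 mod p = (\<Sum>i=1..n. r \<rho> ^ i) mod p" unfolding cong_def sumbij .
      then show ?thesis using True Fv[OF u] unfolding r_def by simp
    next
      case False
      have "par u \<in> set (port u)" using parok[OF u False] port by auto
      moreover have "dd (par u) < dd u" using ddlt[OF u False] by simp
      moreover have "par u \<in> V" using ddlt[OF u False] by simp
      ultimately show ?thesis using False Fv[OF u] Fv[of "par u"] unfolding par'_def by force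
    qed
    have "sum_list (map (\<lambda>(v,t). if F t 2 = u \<and> v \<noteq> F t 0 then F t 4 else 0) (map (\<lambda>v. (v, P \<rho> v)) (port u)))
        = (\<Sum>v\<in>{v. E u v}. if F (P \<rho> v) 2 = u \<and> v \<noteq> F (P \<rho> v) 0 then F (P \<rho> v) 4 else 0)"
      using port by (simp add: sum_list_distinct_conv_sum_set o_def)
    also have "\<dots> = (\<Sum>v\<in>{v. E u v}. if par' v = u \<and> v \<noteq> R0 then SS \<rho> v else 0)"
      using Fv nbV port by (intro sum.cong refl) auto
    also have "\<dots> = (\<Sum>v\<in>{v\<in>{v. E u v}. par' v = u \<and> v \<noteq> R0}. SS \<rho> v)"
    proof -
      have "finite {v. E u v}" using port(2)[symmetric] by simp
      from sum.inter_filter[OF this, of "SS \<rho>" "\<lambda>v. par' v = u \<and> v \<noteq> R0"]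
      show ?thesis by simp
    qed
    also have "{v\<in>{v. E u v}. par' v = u \<and> v \<noteq> R0} = ch u"
    proof (intro set_eqI iffI)
      fix v assume "v \<in> {v\<in>{v. E u v}. par' v = u \<and> v \<noteq> R0}"
      thus "v \<in> ch u" unfolding ch_def using vi_edge[OF vi] by auto
    next
      fix v assume "v \<in> ch u"
      hence v: "v \<in> V" "v \<noteq> R0" "par v = u" unfolding ch_def par'_def by auto
      hence "E v u" using parok[OF v(1,2)] by simp
      hence "E u v" using vi_edge[OF vi] by blast
      thus "v \<in> {v\<in>{v. E u v}. par' v = u \<and> v \<noteq> R0}" using v unfolding par'_def by simp
    qed
    finally have sl: "sum_list (map (\<lambda>(v,t). if F t 2 = u \<and> v \<noteq> F t 0 then F t 4 else 0) (map (\<lambda>v. (v, P \<rho> v)) (port u)))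
        = (\<Sum>v\<in>ch u. SS \<rho> v)" .
    have c3: "F (P \<rho> u) 4 mod p = (F (P \<rho> u) 3 ^ a u + sum_list (map (\<lambda>(v,t). if F t 2 = u \<and> v \<noteq> F t 0 then F t 4 else 0) (map (\<lambda>v. (v, P \<rho> v)) (port u)))) mod p"
      unfolding sl using Fv[OF u] SS[of \<rho>] u by simp
    show "dec c n u (a u) (\<rho> u) (P \<rho> u) (map (\<lambda>v. (v, P \<rho> v)) (port u))"
      unfolding dec_def Let_def using c1 c2 c3 unfolding F_def w_def p_def by simp
  qed
  have "{\<rho> \<in> coin_space V k. all_accept (dec c) n V port a \<rho> (P \<rho>)} = coin_space V k"
    using allacc by auto
  moreover have "card (coin_space V k) > 0" using card_coin_space[OF fin, of k] by simp
  ultimately have "accept_prob (dec c) (K n) n V port a P = 1"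
    unfolding accept_prob_def k_def by simp
  thus ?thesis using pb by auto
qed


theorem theorem1p3:
  "\<forall>c :: nat. \<exists>l :: nat \<Rightarrow> nat.
     (\<lambda>n. real (l n)) \<in> O(\<lambda>n. ln (real n)) \<and> in_dAM c l perm_adm Permutation"
proof
  fix c :: nat
  have kl: "\<forall>n. K n \<le> LL c n" unfolding LL_def Wd_def by simp
  have inst: "\<forall>n V E port a. valid_instance c n V E port \<and> perm_adm n V E a \<longrightarrow>
           (Permutation n V E a \<longrightarrow>
              (\<exists>P. prover_bounded V (K n) (LL c n) P \<and> accept_prob (dec c) (K n) n V port a P > 2/3)) \<and>
           (\<not> Permutation n V E a \<longrightarrow>
              (\<forall>P. prover_bounded V (K n) (LL c n) P \<longrightarrow> accept_prob (dec c) (K n) n V port a P < 1/3))"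
    using completeness soundness by blast
  have "in_dAM c (LL c) perm_adm Permutation"
    unfolding in_dAM_def using kl inst by blast
  thus "\<exists>l :: nat \<Rightarrow> nat. (\<lambda>n. real (l n)) \<in> O(\<lambda>n. ln (real n)) \<and> in_dAM c l perm_adm Permutation"
    using LL_bigo[of c] by blast
qed

end
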